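(* Let $f\in C^\infty(\mathbb{R}^2)$ be a real-valued function whose zero set $\{x\in\mathbb{R}^2: f(x)=0\}$ is exactly the Hawaiian earring \[ \mathcal H=\bigcup_{k=1}^{\infty}\left\{(x,y)\in\mathbb{R}^2:\left(x-\tfrac1k\right)^2+y^2=\tfrac1{k^2}\right\}. \] Then $f$ is flat at the origin (all partial derivatives of all orders of $f$ vanish at $0$), and $f$ does not satisfy a Łojasiewicz inequality with respect to $\mathcal H$ at $0$: there exist no constants $C>0$ and $\theta>0$ such that \[ |f(x)|\ge C\,\mathrm{dist}(x,\mathcal H)^\theta \] for all $x$ in a neighborhood of $0$.
   Context: $\mathrm{dist}(x,\mathcal H)$ denotes the Euclidean distance from $x$ to the set $\mathcal H$. *)

theory Defs
  imports "HOL-Analysis.Analysis"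
begin

definition hawaiian_earring :: "(real \<times> real) set" where
  "hawaiian_earring = (\<Union>k\<in>{1::nat..}. {(x, y). (x - 1 / real k)\<^sup>2 + y\<^sup>2 = 1 / (real k)\<^sup>2})"

definition partial_dir :: "(real \<times> real) \<Rightarrow> ((real \<times> real) \<Rightarrow> real) \<Rightarrow> (real \<times> real) \<Rightarrow> real" where
  "partial_dir v g x = deriv (\<lambda>t. g (x + t *\<^sub>R v)) 0"

text \<open>Iterated partial derivative: the head of the list is applied last.\<close>
fun iter_partial :: "(real \<times> real) list \<Rightarrow> ((real \<times> real) \<Rightarrow> real) \<Rightarrow> (real \<times> real) \<Rightarrow> real" where
  "iter_partial [] g = g"
| "iter_partial (v # vs) g = partial_dir v (iter_partial vs g)"

definition smooth_R2 :: "((real \<times> real) \<Rightarrow> real) \<Rightarrow> bool" where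
  "smooth_R2 g \<longleftrightarrow> (\<forall>vs. set vs \<subseteq> Basis \<longrightarrow>
      continuous_on UNIV (iter_partial vs g) \<and>
      (\<forall>v\<in>Basis. \<forall>x. (\<lambda>t. iter_partial vs g (x + t *\<^sub>R v)) differentiable (at 0)))"

definition flat_at :: "((real \<times> real) \<Rightarrow> real) \<Rightarrow> (real \<times> real) \<Rightarrow> bool" where
  "flat_at g a \<longleftrightarrow> (\<forall>vs. set vs \<subseteq> Basis \<longrightarrow> iter_partial vs g a = 0)"

end

theory Submission
  imports Defs
begin

lemma deriv_line:
  assumes sm: "smooth_R2 f" and vs: "set vs \<subseteq> Basis" and v: "v \<in> Basis"
  shows "((\<lambda>t. iter_partial vs f (x + t *\<^sub>R v)) has_real_derivative
           iter_partial (v#vs) f (x + t0 *\<^sub>R v)) (at t0)"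
proof -
  let ?g = "iter_partial vs f"
  have "(\<lambda>s. ?g ((x + t0 *\<^sub>R v) + s *\<^sub>R v)) differentiable (at 0)"
    using sm vs v unfolding smooth_R2_def by blast
  hence "((\<lambda>s. ?g ((x + t0 *\<^sub>R v) + s *\<^sub>R v)) has_real_derivative partial_dir v ?g (x + t0 *\<^sub>R v)) (at 0)"
    unfolding partial_dir_def by (simp add: DERIV_deriv_iff_real_differentiable)
  hence "((\<lambda>s. ?g (x + (s + t0) *\<^sub>R v)) has_real_derivative partial_dir v ?g (x + t0 *\<^sub>R v)) (at 0)"
    by (simp add: algebra_simps scaleR_add_left)
  hence "((\<lambda>t. ?g (x + t *\<^sub>R v)) has_real_derivative partial_dir v ?g (x + t0 *\<^sub>R v)) (at (0 + t0))"
    using DERIV_shift[where f="\<lambda>t. ?g (x + t *\<^sub>R v)" and x=0 and z=t0] by simp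
  thus ?thesis by simp
qed

lemma rolle_set:
  fixes \<phi> \<phi>' :: "real \<Rightarrow> real"
  assumes der: "\<And>t. (\<phi> has_real_derivative \<phi>' t) (at t)"
  shows "finite Z \<Longrightarrow> card Z = Suc n \<Longrightarrow> (\<forall>z\<in>Z. \<phi> z = 0) \<Longrightarrow>
     \<exists>Z'. finite Z' \<and> card Z' = n \<and> Z' \<subseteq> {Min Z..Max Z} \<and> (\<forall>z\<in>Z'. \<phi>' z = 0)"
proof (induction n arbitrary: Z)
  case 0
  then show ?case by (intro exI[of _ "{}"]) auto
next
  case (Suc n)
  define a where "a = Max Z"
  define Z0 where "Z0 = Z - {a}"
  have ne: "Z \<noteq> {}" using Suc.prems by auto
  have aZ: "a \<in> Z" using Suc.prems ne unfolding a_def by simp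
  have cZ0: "card Z0 = Suc n" using Suc.prems aZ unfolding Z0_def by simp
  have fZ0: "finite Z0" using Suc.prems unfolding Z0_def by simp
  have ne0: "Z0 \<noteq> {}" using cZ0 by auto
  obtain Z0' where Z0': "finite Z0'" "card Z0' = n" "Z0' \<subseteq> {Min Z0..Max Z0}" "\<forall>z\<in>Z0'. \<phi>' z = 0"
    using Suc.IH[OF fZ0 cZ0] Suc.prems(3) unfolding Z0_def by blast
  define b where "b = Max Z0"
  have bZ0: "b \<in> Z0" using fZ0 ne0 unfolding b_def by simp
  have ba: "b < a" using bZ0 Suc.prems(1) unfolding Z0_def a_def
    by (metis Diff_iff Max_ge le_neq_trans singletonI)
  obtain \<xi> where xi: "b < \<xi>" "\<xi> < a" "\<phi> a - \<phi> b = (a - b) * \<phi>' \<xi>"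
    using MVT2[OF ba, of \<phi> \<phi>'] der by blast
  have "\<phi> a = 0" "\<phi> b = 0" using Suc.prems(3) aZ bZ0 unfolding Z0_def by auto
  hence xi0: "\<phi>' \<xi> = 0" using xi ba by simp
  have "\<xi> \<notin> Z0'" using Z0'(3) xi(1) unfolding b_def by auto
  hence card: "card (insert \<xi> Z0') = Suc n" using Z0' by simp
  have "Min Z \<le> Min Z0" using fZ0 ne0 Suc.prems(1) unfolding Z0_def
    by (metis Diff_subset Min_antimono)
  moreover have "Max Z0 \<le> Max Z" using fZ0 ne0 Suc.prems(1) unfolding Z0_def
    by (metis Diff_subset Max_mono)
  moreover have "Min Z \<le> \<xi>" using xi(1) ba \<open>Min Z \<le> Min Z0\<close> bZ0 fZ0 unfolding b_def
    by (metis Min_le dual_order.trans less_imp_le)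
  ultimately have "insert \<xi> Z0' \<subseteq> {Min Z..Max Z}" using Z0'(3) xi(2) unfolding a_def by auto
  then show ?case using card Z0' xi0 by (intro exI[of _ "insert \<xi> Z0'"]) auto
qed

lemma zeros_bound:
  fixes \<phi> :: "nat \<Rightarrow> real \<Rightarrow> real"
  assumes der: "\<And>k t. (\<phi> k has_real_derivative \<phi> (Suc k) t) (at t)"
  shows "finite Z \<Longrightarrow> card Z = Suc N \<Longrightarrow> Z \<subseteq> {a..b} \<Longrightarrow> (\<forall>z\<in>Z. \<phi> 0 z = 0) \<Longrightarrow>
     (\<forall>t\<in>{a..b}. \<bar>\<phi> N t\<bar> \<le> M) \<Longrightarrow> t \<in> {a..b} \<Longrightarrow> \<bar>\<phi> 0 t\<bar> \<le> M * (b - a) ^ N"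
  using der
proof (induction N arbitrary: \<phi> Z t)
  case 0
  then show ?case by simp
next
  case (Suc N)
  obtain Z' where Z': "finite Z'" "card Z' = Suc N" "Z' \<subseteq> {Min Z..Max Z}" "\<forall>z\<in>Z'. \<phi> 1 z = 0"
    using rolle_set[of "\<phi> 0" "\<phi> 1" Z "Suc N"] Suc.prems by auto
  have ne: "Z \<noteq> {}" using Suc.prems by auto
  have "{Min Z..Max Z} \<subseteq> {a..b}" using Suc.prems(1,3) ne by auto
  hence Z'ab: "Z' \<subseteq> {a..b}" using Z'(3) by auto
  have IH: "\<bar>\<phi> 1 s\<bar> \<le> M * (b - a) ^ N" if "s \<in> {a..b}" for s
    using Suc.IH[where \<phi>="\<lambda>k. \<phi> (Suc k)" and Z=Z' and t=s] Z' Z'ab Suc.prems that by auto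
  obtain z where z: "z \<in> Z" using ne by auto
  have zab: "z \<in> {a..b}" "\<phi> 0 z = 0" using z Suc.prems by auto
  have "\<bar>\<phi> 0 t - \<phi> 0 z\<bar> \<le> \<bar>t - z\<bar> * (M * (b - a) ^ N)"
  proof (cases "t = z")
    case True then show ?thesis by simp
  next
    case False
    {
      fix u w assume uw: "u < w" "u \<in> {a..b}" "w \<in> {a..b}"
      obtain \<xi> where "u < \<xi>" "\<xi> < w" "\<phi> 0 w - \<phi> 0 u = (w - u) * \<phi> 1 \<xi>"
        using MVT2[OF uw(1), of "\<phi> 0" "\<phi> 1"] Suc.prems by auto
      moreover have "\<xi> \<in> {a..b}" using calculation uw by auto
      ultimately have "\<bar>\<phi> 0 w - \<phi> 0 u\<bar> \<le> (w - u) * (M * (b - a) ^ N)"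
        using IH[of \<xi>] uw by (simp add: abs_mult mult_left_mono)
    } note mv = this
    show ?thesis
    proof (cases "t < z")
      case True then show ?thesis using mv[of t z] zab Suc.prems by (simp add: abs_minus_commute)
    next
      case False then show ?thesis using mv[of z t] zab Suc.prems \<open>t \<noteq> z\<close> by simp
    qed
  qed
  moreover have "\<bar>t - z\<bar> \<le> b - a" using zab Suc.prems by auto
  moreover have "0 \<le> M * (b - a) ^ N"
    using IH[of t] Suc.prems by (meson abs_ge_zero order_trans)
  ultimately have "\<bar>\<phi> 0 t\<bar> \<le> (b - a) * (M * (b - a) ^ N)"
    using zab(2) by (metis diff_zero mult_right_mono order_trans)
  then show ?case by (simp add: algebra_simps)
qed

lemma bound_closure:
  fixes g B :: "real \<times> real \<Rightarrow> real"
  assumes "continuous_on UNIV g" "continuous_on UNIV B" "\<forall>p\<in>S. \<bar>g p\<bar> \<le> B p" "x \<in> closure S"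
  shows "\<bar>g x\<bar> \<le> B x"
proof -
  have "closed {p. \<bar>g p\<bar> \<le> B p}" by (intro closed_Collect_le continuous_on_rabs assms)
  hence "closure S \<subseteq> {p. \<bar>g p\<bar> \<le> B p}" using assms(3) by (intro closure_minimal) auto
  thus ?thesis using assms(4) by auto
qed

lemma norm_pair_le: "norm (a::real, b::real) \<le> \<bar>a\<bar> + \<bar>b\<bar>"
  by (simp add: norm_Pair sqrt_sum_squares_le_sum_abs)

lemma in_closure_offline:
  fixes p :: "real \<times> real"
  assumes "norm p < \<delta>"
  shows "p \<in> closure {q. norm q < \<delta> \<and> snd q \<noteq> 0}"
proof (cases "snd p = 0")
  case False
  hence "p \<in> {q. norm q < \<delta> \<and> snd q \<noteq> 0}" using assms by simp
  then show ?thesis by (rule closure_subset[THEN subsetD])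
next
  case True
  obtain x where px: "p = (x, 0)" using True by (cases p) auto
  have ax: "\<bar>x\<bar> < \<delta>" using assms px by (simp add: norm_Pair)
  show ?thesis unfolding closure_approachable
  proof (intro allI impI)
    fix e :: real assume e: "e > 0"
    define s where "s = min e (\<delta> - \<bar>x\<bar>) / 2"
    have s: "s > 0" "s < e" "s < \<delta> - \<bar>x\<bar>" using e ax unfolding s_def by auto
    have "norm (x, s) \<le> \<bar>x\<bar> + \<bar>s\<bar>" by (rule norm_pair_le)
    hence n: "norm (x, s) < \<delta>" using s by linarith
    have d: "dist (x, s) p = s" unfolding px dist_prod_def using s by simp
    have mem: "(x, s) \<in> {q. norm q < \<delta> \<and> snd q \<noteq> 0}" using n s by simp
    show "\<exists>y\<in>{q. norm q < \<delta> \<and> snd q \<noteq> 0}. dist y p < e"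
      using mem d s(2) by (intro bexI[of _ "(x, s)"]) simp_all
  qed
qed

definition Qsmall :: "(real \<times> real \<Rightarrow> real) \<Rightarrow> bool" where
  "Qsmall g \<longleftrightarrow> (\<forall>m. \<exists>\<delta>>0. \<exists>C. \<forall>p. norm p < \<delta> \<longrightarrow> \<bar>g p\<bar> \<le> C * norm p ^ m)"

lemma circle_point:
  fixes c :: real and k N :: nat
  assumes k: "1 \<le> k" "k \<le> Suc N" and c: "c \<noteq> 0" "\<bar>c\<bar> < 1 / real (Suc N)"
  defines "xk \<equiv> (1 - sqrt (1 - (real k * c)\<^sup>2)) / real k"
  shows "(xk - 1 / real k)\<^sup>2 + c\<^sup>2 = 1 / (real k)\<^sup>2" "0 \<le> xk" "xk \<le> \<bar>c\<bar>"
proof -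
  have kpos: "real k > 0" using k by simp
  have "real k * \<bar>c\<bar> \<le> real (Suc N) * \<bar>c\<bar>" using k by (intro mult_right_mono) auto
  also have "\<dots> < 1" using c by (simp add: field_simps)
  finally have kc: "real k * \<bar>c\<bar> < 1" .
  hence kc2: "(real k * c)\<^sup>2 < 1"
    by (simp add: abs_square_less_1 abs_mult)
  define s where "s = sqrt (1 - (real k * c)\<^sup>2)"
  have s0: "0 \<le> s" "s \<le> 1" "s\<^sup>2 = 1 - (real k * c)\<^sup>2" using kc2 unfolding s_def by auto
  have xk: "xk = (1 - s) / real k" unfolding xk_def s_def ..
  have "xk - 1 / real k = - s / real k" using kpos unfolding xk by (simp add: field_simps)
  hence "(xk - 1 / real k)\<^sup>2 = s\<^sup>2 / (real k)\<^sup>2" by (simp add: power_divide)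
  also have "\<dots> = 1 / (real k)\<^sup>2 - c\<^sup>2" using s0(3) kpos by (simp add: field_simps power_mult_distrib)
  finally show "(xk - 1 / real k)\<^sup>2 + c\<^sup>2 = 1 / (real k)\<^sup>2" by simp
  show "0 \<le> xk" unfolding xk using s0 kpos by simp
  have "s * s \<le> s * 1" using s0 by (intro mult_left_mono) auto
  hence "1 - s \<le> (real k * c)\<^sup>2" using s0(3) by (simp add: power2_eq_square)
  hence "xk \<le> (real k * c)\<^sup>2 / real k" unfolding xk using s0 kpos by (intro divide_right_mono) auto
  also have "\<dots> = \<bar>c\<bar> * (real k * \<bar>c\<bar>)" using kpos by (simp add: power2_eq_square)
  also have "\<dots> \<le> \<bar>c\<bar>" using kc by (simp add: mult_left_le)
  finally show "xk \<le> \<bar>c\<bar>" .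
qed

lemma in_H:
  assumes "1 \<le> k" "(x - 1 / real k)\<^sup>2 + y\<^sup>2 = 1 / (real k)\<^sup>2"
  shows "(x, y) \<in> hawaiian_earring"
  unfolding hawaiian_earring_def using assms by (intro UN_I[of k]) auto

lemma e1_Basis: "((1::real), (0::real)) \<in> Basis"
  by (simp add: Basis_prod_def)

lemma base_small:
  assumes sm: "smooth_R2 f" and Z: "{p. f p = 0} = hawaiian_earring"
  shows "Qsmall f"
  unfolding Qsmall_def
proof
  fix N :: nat
  define e1 where "e1 = ((1::real), (0::real))"
  have e1B: "e1 \<in> Basis" unfolding e1_def by (rule e1_Basis)
  define g where "g = iter_partial (replicate N e1) f"
  have "set (replicate N e1) \<subseteq> Basis" using e1B by auto
  hence gcont: "continuous_on UNIV g" using sm unfolding smooth_R2_def g_def by blast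
  have "compact (g ` cball 0 2)"
    by (intro compact_continuous_image continuous_on_subset[OF gcont]) auto
  then obtain M where M: "\<forall>q\<in>cball 0 2. \<bar>g q\<bar> \<le> M"
    using compact_imp_bounded bounded_real by (metis imageI)
  have fcont: "continuous_on UNIV f" using sm unfolding smooth_R2_def
    by (metis empty_subsetI iter_partial.simps(1) list.set(1))
  define \<delta> where "\<delta> = 1 / real (Suc N)"
  define C where "C = M * 2 ^ N"
  have main: "\<bar>f p\<bar> \<le> C * norm p ^ N" if p: "norm p < \<delta>" "snd p \<noteq> 0" for p
  proof -
    obtain x c where pxc: "p = (x, c)" by (cases p)
    define r where "r = norm p"
    have xr: "\<bar>x\<bar> \<le> r" "\<bar>c\<bar> \<le> r" unfolding r_def pxc
      by (metis norm_fst_le real_norm_def, metis norm_snd_le real_norm_def)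
    have "\<delta> \<le> 1" unfolding \<delta>_def by simp
    hence r1: "r < 1" using p unfolding r_def by linarith
    have c: "c \<noteq> 0" "\<bar>c\<bar> < 1 / real (Suc N)" using p xr unfolding pxc r_def \<delta>_def by auto
    define \<phi> where "\<phi> = (\<lambda>k t. iter_partial (replicate k e1) f (t, c))"
    have der: "(\<phi> k has_real_derivative \<phi> (Suc k) t) (at t)" for k t
    proof -
      have "set (replicate k e1) \<subseteq> Basis" using e1B by auto
      from deriv_line[OF sm this e1B, of "(0, c)" t]
      show ?thesis unfolding \<phi>_def e1_def by simp
    qed
    define xk where "xk = (\<lambda>k::nat. (1 - sqrt (1 - (real k * c)\<^sup>2)) / real k)"
    have cp: "(xk k - 1 / real k)\<^sup>2 + c\<^sup>2 = 1 / (real k)\<^sup>2" "0 \<le> xk k" "xk k \<le> \<bar>c\<bar>"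
      if "k \<in> {1..Suc N}" for k
      using circle_point[of k N c] that c unfolding xk_def by auto
    have inj: "inj_on xk {1..Suc N}"
    proof (rule inj_onI)
      fix j k assume j: "j \<in> {1..Suc N}" and k: "k \<in> {1..Suc N}" and eq: "xk j = xk k"
      define z where "z = xk j"
      have jp: "real j > 0" "real k > 0" using j k by auto
      have sq: "(z - 1 / real i)\<^sup>2 = z * z - 2 * z / real i + 1 / (real i)\<^sup>2" for i
        by (simp add: power2_eq_square divide_inverse algebra_simps)
      have h1: "(z - 1 / real j)\<^sup>2 + c\<^sup>2 = 1 / (real j)\<^sup>2" using cp(1)[OF j] unfolding z_def .
      have h2: "(z - 1 / real k)\<^sup>2 + c\<^sup>2 = 1 / (real k)\<^sup>2" using cp(1)[OF k] unfolding z_def eq .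
      have e1: "z * z - 2 * z / real j + c * c = 0"
        using h1 sq[of j] power2_eq_square[of c] by linarith
      have e2: "z * z - 2 * z / real k + c * c = 0"
        using h2 sq[of k] power2_eq_square[of c] by linarith
      have "z \<noteq> 0" using e1 c(1) by auto
      hence "1 / real j = 1 / real k" using e1 e2 by (simp add: field_simps)
      thus "j = k" using jp by simp
    qed
    define Zs where "Zs = xk ` {1..Suc N}"
    have fin: "finite Zs" "card Zs = Suc N" unfolding Zs_def using inj by (auto simp: card_image)
    have Zsub: "Zs \<subseteq> {-r..r}" unfolding Zs_def using cp xr by force
    have zero: "\<forall>z\<in>Zs. \<phi> 0 z = 0"
    proof
      fix z assume "z \<in> Zs"
      then obtain k where k: "k \<in> {1..Suc N}" "z = xk k" unfolding Zs_def by auto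
      have "(z, c) \<in> hawaiian_earring" using in_H[of k z c] cp(1)[OF k(1)] k by auto
      then show "\<phi> 0 z = 0" using Z unfolding \<phi>_def by auto
    qed
    have bnd: "\<forall>t\<in>{-r..r}. \<bar>\<phi> N t\<bar> \<le> M"
    proof
      fix t assume t: "t \<in> {-r..r}"
      have "norm (t, c) \<le> \<bar>t\<bar> + \<bar>c\<bar>" by (rule norm_pair_le)
      hence "(t, c) \<in> cball 0 2" using t xr r1 by auto
      thus "\<bar>\<phi> N t\<bar> \<le> M" using M unfolding \<phi>_def g_def by auto
    qed
    have "x \<in> {-r..r}" using xr by auto
    from zeros_bound[of \<phi>, OF der fin Zsub zero bnd this]
    have "\<bar>\<phi> 0 x\<bar> \<le> M * (r - - r) ^ N" .
    also have "\<dots> = C * r ^ N" unfolding C_def by (simp add: power_mult_distrib)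
    finally show ?thesis unfolding \<phi>_def pxc r_def by simp
  qed
  have "\<forall>p. norm p < \<delta> \<longrightarrow> \<bar>f p\<bar> \<le> C * norm p ^ N"
  proof (intro allI impI)
    fix p :: "real \<times> real" assume "norm p < \<delta>"
    from in_closure_offline[OF this]
    show "\<bar>f p\<bar> \<le> C * norm p ^ N"
      using main by (intro bound_closure[OF fcont _ _ ]) (auto intro!: continuous_intros)
  qed
  moreover have "\<delta> > 0" unfolding \<delta>_def by simp
  ultimately show "\<exists>\<delta>>0. \<exists>C. \<forall>p. norm p < \<delta> \<longrightarrow> \<bar>f p\<bar> \<le> C * norm p ^ N" by blast
qed

lemma zero_in_closure_punct:
  assumes d: "d > 0"
  shows "(0::real \<times> real) \<in> closure {q. 0 < norm q \<and> norm q < d}"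
  unfolding closure_approachable
proof (intro allI impI)
  fix e :: real assume e: "e > 0"
  define t where "t = min e d / 2"
  have t: "t > 0" "t < e" "t < d" using e d unfolding t_def by auto
  have n: "norm (t, 0::real) = t" using t by (simp add: norm_Pair)
  have "dist (t, 0::real) 0 = t" using n by (simp add: dist_norm)
  then show "\<exists>y\<in>{q. 0 < norm q \<and> norm q < d}. dist y (0::real \<times> real) < e"
    using n t by (intro bexI[of _ "(t, 0)"]) (auto simp: zero_prod_def)
qed

lemma cont_bound:
  assumes "continuous_on UNIV (h :: real \<times> real \<Rightarrow> real)"
  shows "\<exists>M. \<forall>q\<in>cball 0 R. \<bar>h q\<bar> \<le> M"
proof -
  have "compact (h ` cball 0 R)"
    by (intro compact_continuous_image continuous_on_subset[OF assms]) auto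
  then show ?thesis using compact_imp_bounded bounded_real by (metis imageI)
qed

lemma step_small:
  assumes sm: "smooth_R2 f" and vs: "set vs \<subseteq> Basis" and v: "v \<in> Basis"
    and Q: "Qsmall (iter_partial vs f)"
  shows "Qsmall (iter_partial (v#vs) f)"
  unfolding Qsmall_def
proof
  fix m :: nat
  define g where "g = iter_partial vs f"
  define g1 where "g1 = iter_partial (v#vs) f"
  define g2 where "g2 = iter_partial (v#v#vs) f"
  define n where "n = Suc m"
  obtain \<delta> C where \<delta>: "\<delta> > 0" and C: "\<forall>p. norm p < \<delta> \<longrightarrow> \<bar>g p\<bar> \<le> C * norm p ^ (2*n)"
    using Q unfolding Qsmall_def g_def by blast
  have vs1: "set (v#vs) \<subseteq> Basis" and vs2: "set (v#v#vs) \<subseteq> Basis" using vs v by auto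
  have g1c: "continuous_on UNIV g1" using sm vs1 unfolding smooth_R2_def g1_def by blast
  have g2c: "continuous_on UNIV g2" using sm vs2 unfolding smooth_R2_def g2_def by blast
  obtain M0 where M0: "\<forall>q\<in>cball 0 1. \<bar>g2 q\<bar> \<le> M0" using cont_bound[OF g2c] by blast
  define M where "M = \<bar>M0\<bar>"
  have M: "\<forall>q\<in>cball 0 1. \<bar>g2 q\<bar> \<le> M" "M \<ge> 0" using M0 unfolding M_def by force+
  have nv: "norm v = 1" using v by (simp add: norm_Basis)
  have npt: "norm (p + t *\<^sub>R v) \<le> norm p + \<bar>t\<bar>" for p :: "real \<times> real" and t
    using norm_triangle_ineq[of p "t *\<^sub>R v"] nv by simp
  define d where "d = min (\<delta> / 2) (1 / 2)"
  have d: "d > 0" using \<delta> unfolding d_def by simp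
  define K where "K = \<bar>C\<bar> * 4 ^ n + \<bar>C\<bar> + M"
  have K0: "K \<ge> 0" unfolding K_def using M by simp
  have main: "\<bar>g1 p\<bar> \<le> K * norm p ^ m" if p: "0 < norm p" "norm p < d" for p
  proof -
    define r where "r = norm p"
    have r: "0 < r" "r < \<delta> / 2" "r \<le> 1 / 2" using p unfolding r_def d_def by auto
    define h where "h = r ^ n"
    have h: "0 < h" "h \<le> r" unfolding h_def n_def using r
      by (auto simp: power_le_one mult_left_le)
    have derg: "\<And>t. ((\<lambda>t. g (p + t *\<^sub>R v)) has_real_derivative g1 (p + t *\<^sub>R v)) (at t)"
      unfolding g_def g1_def by (rule deriv_line[OF sm vs v])
    have derg1: "\<And>t. ((\<lambda>t. g1 (p + t *\<^sub>R v)) has_real_derivative g2 (p + t *\<^sub>R v)) (at t)"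
      unfolding g1_def g2_def by (rule deriv_line[OF sm vs1 v])
    obtain s where s: "0 < s" "s < h" "g (p + h *\<^sub>R v) - g (p + 0 *\<^sub>R v) = (h - 0) * g1 (p + s *\<^sub>R v)"
      using MVT2[OF h(1), of "\<lambda>t. g (p + t *\<^sub>R v)" "\<lambda>t. g1 (p + t *\<^sub>R v)"] derg by blast
    obtain s' where s': "0 < s'" "s' < s" "g1 (p + s *\<^sub>R v) - g1 (p + 0 *\<^sub>R v) = (s - 0) * g2 (p + s' *\<^sub>R v)"
      using MVT2[OF s(1), of "\<lambda>t. g1 (p + t *\<^sub>R v)" "\<lambda>t. g2 (p + t *\<^sub>R v)"] derg1 by blast
    have "norm (p + s' *\<^sub>R v) \<le> 1" using npt[of p s'] s s' h r unfolding r_def by auto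
    hence b2: "\<bar>g2 (p + s' *\<^sub>R v)\<bar> \<le> M" using M by auto
    have nph: "norm (p + h *\<^sub>R v) \<le> 2 * r" using npt[of p h] h unfolding r_def by auto
    have "norm (p + h *\<^sub>R v) < \<delta>" using nph r by linarith
    hence "\<bar>g (p + h *\<^sub>R v)\<bar> \<le> C * norm (p + h *\<^sub>R v) ^ (2*n)" using C by blast
    also have "\<dots> \<le> \<bar>C\<bar> * (2 * r) ^ (2*n)"
    proof -
      have pw: "norm (p + h *\<^sub>R v) ^ (2*n) \<le> (2 * r) ^ (2*n)" using nph by (intro power_mono) auto
      have "C * norm (p + h *\<^sub>R v) ^ (2*n) \<le> \<bar>C\<bar> * norm (p + h *\<^sub>R v) ^ (2*n)"
        by (intro mult_right_mono) auto
      also have "\<dots> \<le> \<bar>C\<bar> * (2 * r) ^ (2*n)" using pw by (intro mult_left_mono) auto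
      finally show ?thesis .
    qed
    also have "\<dots> = \<bar>C\<bar> * 4 ^ n * (r ^ n * h)"
    proof -
      have "(2 * r) ^ (2*n) = ((2 * r)\<^sup>2) ^ n" by (simp add: power_mult)
      also have "\<dots> = 4 ^ n * (r ^ n * r ^ n)" by (simp add: power_mult_distrib power2_eq_square)
      finally show ?thesis unfolding h_def by simp
    qed
    finally have a1: "\<bar>g (p + h *\<^sub>R v)\<bar> \<le> \<bar>C\<bar> * 4 ^ n * (r ^ n * h)" .
    have "norm p < \<delta>" using r unfolding r_def by linarith
    hence "\<bar>g p\<bar> \<le> C * r ^ (2*n)" using C unfolding r_def by blast
    also have "\<dots> \<le> \<bar>C\<bar> * (r ^ n * h)"
    proof -
      have "r ^ (2*n) = r ^ n * r ^ n" by (simp add: mult_2 power_add)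
      thus ?thesis unfolding h_def using r by (simp add: mult_right_mono)
    qed
    finally have a2: "\<bar>g p\<bar> \<le> \<bar>C\<bar> * (r ^ n * h)" .
    have s3: "g (p + h *\<^sub>R v) - g p = h * g1 (p + s *\<^sub>R v)" using s(3) by simp
    have "\<bar>g1 (p + s *\<^sub>R v)\<bar> * h = \<bar>g (p + h *\<^sub>R v) - g p\<bar>" unfolding s3 abs_mult
      using h(1) by simp
    also have "\<dots> \<le> (\<bar>C\<bar> * 4 ^ n + \<bar>C\<bar>) * r ^ n * h"
    proof -
      have t4: "\<bar>g (p + h *\<^sub>R v) - g p\<bar> \<le> \<bar>g (p + h *\<^sub>R v)\<bar> + \<bar>g p\<bar>" by (rule abs_triangle_ineq4)
      have eq: "(\<bar>C\<bar> * 4 ^ n + \<bar>C\<bar>) * r ^ n * h = \<bar>C\<bar> * 4 ^ n * (r ^ n * h) + \<bar>C\<bar> * (r ^ n * h)"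
        by (simp only: distrib_right mult.assoc)
      show ?thesis using t4 a1 a2 eq by linarith
    qed
    finally have "\<bar>g1 (p + s *\<^sub>R v)\<bar> \<le> (\<bar>C\<bar> * 4 ^ n + \<bar>C\<bar>) * r ^ n"
      by (simp only: mult_le_cancel_right_pos[OF h(1)])
    moreover have "\<bar>g1 p - g1 (p + s *\<^sub>R v)\<bar> \<le> M * r ^ n"
    proof -
      have s3': "g1 (p + s *\<^sub>R v) - g1 p = s * g2 (p + s' *\<^sub>R v)" using s'(3) by simp
      have "\<bar>g1 p - g1 (p + s *\<^sub>R v)\<bar> = s * \<bar>g2 (p + s' *\<^sub>R v)\<bar>"
        unfolding abs_minus_commute[of "g1 p"] s3' abs_mult using s(1) by simp
      also have "\<dots> \<le> h * M" using s b2 M(2) by (intro mult_mono) simp_all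
      finally show ?thesis unfolding h_def by (simp only: mult.commute)
    qed
    ultimately have A: "\<bar>g1 (p + s *\<^sub>R v)\<bar> + \<bar>g1 p - g1 (p + s *\<^sub>R v)\<bar> \<le> K * r ^ n"
      unfolding K_def by (simp only: distrib_right)
    have tri: "\<bar>g1 p\<bar> \<le> \<bar>g1 (p + s *\<^sub>R v)\<bar> + \<bar>g1 p - g1 (p + s *\<^sub>R v)\<bar>" by arith
    have rn: "r ^ n \<le> r ^ m" unfolding n_def using r by (simp add: mult_left_le_one_le)
    have "\<bar>g1 p\<bar> \<le> K * r ^ n" using A tri by linarith
    also have "\<dots> \<le> K * r ^ m" using rn K0 by (rule mult_left_mono)
    finally show ?thesis unfolding r_def .
  qed
  have "\<forall>p. norm p < d \<longrightarrow> \<bar>g1 p\<bar> \<le> K * norm p ^ m"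
  proof (intro allI impI)
    fix p :: "real \<times> real" assume pd: "norm p < d"
    show "\<bar>g1 p\<bar> \<le> K * norm p ^ m"
    proof (cases "p = 0")
      case False then show ?thesis using main pd by auto
    next
      case True
      show ?thesis unfolding True
        by (rule bound_closure[OF g1c _ _ zero_in_closure_punct[OF d]])
           (use main in \<open>auto intro!: continuous_intros\<close>)
    qed
  qed
  then show "\<exists>\<delta>>0. \<exists>C. \<forall>p. norm p < \<delta> \<longrightarrow> \<bar>iter_partial (v # vs) f p\<bar> \<le> C * norm p ^ m"
    using d unfolding g1_def by blast
qed

lemma all_small:
  assumes sm: "smooth_R2 f" and Z: "{p. f p = 0} = hawaiian_earring"
  shows "set vs \<subseteq> Basis \<Longrightarrow> Qsmall (iter_partial vs f)"
proof (induction vs)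
  case Nil
  then show ?case using base_small[OF sm Z] by simp
next
  case (Cons v vs)
  then show ?case using step_small[OF sm, of vs v] by simp
qed

lemma small_zero: "Qsmall g \<Longrightarrow> g 0 = 0"
  unfolding Qsmall_def
proof -
  assume "\<forall>m. \<exists>\<delta>>0. \<exists>C. \<forall>p. norm p < \<delta> \<longrightarrow> \<bar>g p\<bar> \<le> C * norm p ^ m"
  then obtain \<delta> C where d0: "\<delta> > 0" and b: "\<forall>p. norm p < \<delta> \<longrightarrow> \<bar>g p\<bar> \<le> C * norm p ^ 1" by blast
  have "norm (0::real \<times> real) < \<delta>" using d0 by simp
  then have "\<bar>g 0\<bar> \<le> C * norm (0::real \<times> real) ^ 1" using b by blast
  then show "g 0 = 0" by simp
qed

lemma zero_in_H: "(0::real \<times> real) \<in> hawaiian_earring"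
  using in_H[of 1 0 0] by (simp add: zero_prod_def)

lemma arith_aux:
  fixes x u A B D :: real
  assumes "x = A + B" "B \<le> A" "0 < B" "u \<ge> A \<or> u \<le> B" "\<bar>x - u\<bar> \<le> D + u" "u \<le> D + \<bar>x - u\<bar>"
  shows "A - B \<le> D"
proof (cases "x \<ge> u")
  case True then show ?thesis using assms by (auto simp: abs_if split: if_splits)
next
  case False then show ?thesis using assms by (auto simp: abs_if split: if_splits)
qed

lemma infdist_H:
  assumes k: "k \<ge> (1::nat)"
  shows "1 / (real k * (real k + 1)) \<le> infdist (1 / real k + 1 / (real k + 1), 0) hawaiian_earring"
proof -
  define x where "x = 1 / real k + 1 / (real k + 1)"
  define d where "d = 1 / real k - 1 / (real k + 1)"
  have kp: "real k \<ge> 1" using k by simp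
  have dd: "1 / (real k * (real k + 1)) = d" unfolding d_def using kp by (simp add: field_simps)
  have ne: "hawaiian_earring \<noteq> {}" using zero_in_H by auto
  have "d \<le> dist (x, 0) q" if q: "q \<in> hawaiian_earring" for q
  proof -
    obtain j a b where j: "j \<ge> 1" and qab: "q = (a, b)" and eq: "(a - 1 / real j)\<^sup>2 + b\<^sup>2 = 1 / (real j)\<^sup>2"
      using q unfolding hawaiian_earring_def by auto
    define u where "u = 1 / real j"
    have u0: "u > 0" unfolding u_def using j by simp
    have equ: "(a - u)\<^sup>2 + b\<^sup>2 = u\<^sup>2" using eq unfolding u_def by (simp add: power_divide)
    have "dist q (u, 0) = sqrt ((a - u)\<^sup>2 + b\<^sup>2)" by (simp add: qab dist_Pair_Pair dist_real_def)
    hence d1: "dist q (u, 0::real) = u" using equ u0 by simp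
    have d2: "dist (x, 0::real) (u, 0::real) = \<bar>x - u\<bar>" by (simp add: dist_Pair_Pair dist_real_def)
    have t1: "dist (x, 0::real) (u, 0::real) \<le> dist (x, 0::real) q + dist q (u, 0::real)" by (rule dist_triangle)
    have t2: "dist q (u, 0::real) \<le> dist q (x, 0::real) + dist (x, 0::real) (u, 0::real)" by (rule dist_triangle)
    have cases: "u \<ge> 1 / real k \<or> u \<le> 1 / (real k + 1)"
    proof (cases "j \<le> k")
      case True then have "real j \<le> real k" by simp
      then show ?thesis unfolding u_def using j by (intro disjI1 divide_left_mono) auto
    next
      case False then have "real k + 1 \<le> real j" by simp
      then show ?thesis unfolding u_def using kp by (intro disjI2 divide_left_mono) auto
    qed
    have xk: "x = 1 / real k + 1 / (real k + 1)" by (rule x_def)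
    have "1 / (real k + 1) \<le> 1 / real k" using kp by (intro divide_left_mono) auto
    have pos: "1 / (real k + 1) > 0" using kp by simp
    have D1: "\<bar>x - u\<bar> \<le> dist (x, 0::real) q + u" using t1 d1 d2 by linarith
    have D2: "u \<le> dist (x, 0::real) q + \<bar>x - u\<bar>" using t2 d1 d2 dist_commute[of q "(x, 0::real)"] by linarith
    show ?thesis unfolding d_def using arith_aux[OF xk \<open>1 / (real k + 1) \<le> 1 / real k\<close> pos cases D1 D2] .
  qed
  then have "d \<le> infdist (x, 0) hawaiian_earring"
    unfolding infdist_notempty[OF ne] using ne by (intro cINF_greatest) auto
  then show ?thesis using dd unfolding x_def by simp
qed

theorem theorem5:
  fixes f :: "real \<times> real \<Rightarrow> real"
  assumes "smooth_R2 f"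
    and "{p. f p = 0} = hawaiian_earring"
  shows "flat_at f 0 \<and>
    \<not> (\<exists>C>0. \<exists>\<theta>>0. \<exists>U. open U \<and> (0::real \<times> real) \<in> U \<and>
          (\<forall>p\<in>U. \<bar>f p\<bar> \<ge> C * infdist p hawaiian_earring powr \<theta>))"
proof
  have allQ: "\<And>vs. set vs \<subseteq> Basis \<Longrightarrow> Qsmall (iter_partial vs f)"
    using all_small[OF assms] by blast
  show "flat_at f 0" unfolding flat_at_def using allQ small_zero by blast
  show "\<not> (\<exists>C>0. \<exists>\<theta>>0. \<exists>U. open U \<and> (0::real \<times> real) \<in> U \<and>
          (\<forall>p\<in>U. \<bar>f p\<bar> \<ge> C * infdist p hawaiian_earring powr \<theta>))"
  proof
    assume "\<exists>C>0. \<exists>\<theta>>0. \<exists>U. open U \<and> (0::real \<times> real) \<in> U \<and>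
          (\<forall>p\<in>U. \<bar>f p\<bar> \<ge> C * infdist p hawaiian_earring powr \<theta>)"
    then obtain C0 \<theta> U where C0: "C0 > 0" and th: "\<theta> > 0" and U: "open U" "(0::real \<times> real) \<in> U"
      and L: "\<forall>p\<in>U. \<bar>f p\<bar> \<ge> C0 * infdist p hawaiian_earring powr \<theta>" by blast
    obtain \<epsilon> where eps: "\<epsilon> > 0" "ball 0 \<epsilon> \<subseteq> U" using U open_contains_ball by blast
    define N where "N = nat \<lceil>2 * \<theta>\<rceil> + 1"
    have "real (nat \<lceil>2 * \<theta>\<rceil>) = of_int \<lceil>2 * \<theta>\<rceil>" using th by simp
    moreover have "2 * \<theta> \<le> of_int \<lceil>2 * \<theta>\<rceil>" by (rule le_of_int_ceiling)
    moreover have "real N = real (nat \<lceil>2 * \<theta>\<rceil>) + 1" unfolding N_def by simp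
    ultimately have N: "real N > 2 * \<theta>" by linarith
    have "Qsmall f" using allQ[of "[]"] by simp
    then obtain \<delta> K where d: "\<delta> > 0" and Kb: "\<forall>p. norm p < \<delta> \<longrightarrow> \<bar>f p\<bar> \<le> K * norm p ^ N"
      unfolding Qsmall_def by blast
    define K' where "K' = \<bar>K\<bar> + 1"
    have K': "K' > 0" "K \<le> K'" unfolding K'_def by auto
    define a where "a = real N - 2 * \<theta>"
    have a: "a > 0" unfolding a_def using N by simp
    define c where "c = C0 / 8 powr \<theta>"
    have c: "c > 0" unfolding c_def using C0 by simp
    define \<eta> where "\<eta> = min (min \<epsilon> \<delta>) ((c / K') powr (1 / a))"
    have eta: "\<eta> > 0" unfolding \<eta>_def using eps d c K' by simp
    obtain k :: nat where k: "2 / \<eta> < real k" using reals_Archimedean2 by blast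
    have "2 / \<eta> > 0" using eta by simp
    hence kpos: "real k > 0" using k by linarith
    have k1: "k \<ge> 1" using kpos by simp
    define x where "x = 1 / real k + 1 / (real k + 1)"
    have x0: "x > 0" unfolding x_def using kpos by (simp add: add_pos_pos)
    have kk: "1 / (real k + 1) \<le> 1 / real k" using kpos by (intro divide_left_mono) auto
    have x2: "x \<le> 2 / real k" unfolding x_def using kk by simp
    have "2 / real k < \<eta>" using k eta kpos by (simp add: field_simps)
    hence xe: "x < \<eta>" using x2 by linarith
    define p where "p = (x, 0::real)"
    have np: "norm p = x" unfolding p_def using x0 by (simp add: norm_Pair)
    have "p \<in> ball 0 \<epsilon>" using np xe unfolding \<eta>_def by (simp add: dist_norm)
    hence pU: "p \<in> U" using eps by blast
    have "x\<^sup>2 / 8 \<le> 1 / (real k * (real k + 1))"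
    proof -
      have "x\<^sup>2 \<le> (2 / real k)\<^sup>2" using x2 x0 by (intro power_mono) auto
      also have "\<dots> = 4 / (real k)\<^sup>2" by (simp add: power_divide)
      finally have h1: "x\<^sup>2 / 8 \<le> 1 / (2 * (real k)\<^sup>2)" by simp
      have "real k * (real k + 1) \<le> 2 * (real k)\<^sup>2" using k1 by (simp add: power2_eq_square algebra_simps)
      hence "1 / (2 * (real k)\<^sup>2) \<le> 1 / (real k * (real k + 1))" using kpos
        by (intro divide_left_mono) (auto intro: mult_pos_pos)
      with h1 show ?thesis by linarith
    qed
    also have "\<dots> \<le> infdist p hawaiian_earring" unfolding p_def x_def by (rule infdist_H[OF k1])
    finally have idp: "x\<^sup>2 / 8 \<le> infdist p hawaiian_earring" .
    have "(x\<^sup>2 / 8) powr \<theta> = x powr (2 * \<theta>) / 8 powr \<theta>"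
    proof -
      have "x\<^sup>2 = x powr 2" using x0 powr_realpow[of x 2] by simp
      hence "(x\<^sup>2) powr \<theta> = x powr (2 * \<theta>)" by (simp add: powr_powr)
      thus ?thesis using x0 by (simp add: powr_divide)
    qed
    hence low: "c * x powr (2 * \<theta>) \<le> \<bar>f p\<bar>"
    proof -
      assume eq: "(x\<^sup>2 / 8) powr \<theta> = x powr (2 * \<theta>) / 8 powr \<theta>"
      have "(x\<^sup>2 / 8) powr \<theta> \<le> infdist p hawaiian_earring powr \<theta>"
        using idp th x0 by (intro powr_mono2) auto
      hence "C0 * (x\<^sup>2 / 8) powr \<theta> \<le> C0 * infdist p hawaiian_earring powr \<theta>"
        using C0 by (intro mult_left_mono) auto
      also have "\<dots> \<le> \<bar>f p\<bar>" using L pU by blast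
      finally show ?thesis unfolding eq c_def by (simp add: field_simps)
    qed
    have "norm p < \<delta>" using np xe unfolding \<eta>_def by simp
    hence "\<bar>f p\<bar> \<le> K * x ^ N" using Kb np by metis
    also have "\<dots> \<le> K' * x ^ N" using K' x0 by (intro mult_right_mono) auto
    also have "\<dots> = K' * x powr a * x powr (2 * \<theta>)"
    proof -
      have "x ^ N = x powr (real N)" using powr_realpow[OF x0] by simp
      also have "\<dots> = x powr (a + 2 * \<theta>)" unfolding a_def by simp
      also have "\<dots> = x powr a * x powr (2 * \<theta>)" by (rule powr_add)
      finally show ?thesis by simp
    qed
    finally have up: "\<bar>f p\<bar> \<le> K' * x powr a * x powr (2 * \<theta>)" .
    have "x < (c / K') powr (1 / a)" using xe unfolding \<eta>_def by simp
    hence "x powr a < ((c / K') powr (1 / a)) powr a" using a x0 by (intro powr_less_mono2) auto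
    also have "\<dots> = c / K'" using a c K' by (simp add: powr_powr)
    finally have "K' * x powr a < c" using K' by (simp add: field_simps)
    hence "K' * x powr a * x powr (2 * \<theta>) < c * x powr (2 * \<theta>)" using x0 by simp
    with low up show False by linarith
  qed
qed

end
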